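(* Let $A_1,A_2,B_1,B_2\in\mathcal{M}_n$ be such that $A_1\otimes A_2$ and $B_1\otimes B_2$ belong to the balls of diameter $[m_1I_{n^2},M_1I_{n^2}]$ and $[m_2I_{n^2},M_2I_{n^2}]$ respectively, for some $m_1,M_1,m_2,M_2\in\mathbb C$. Then $$\left|(A_1B_1)\circ(A_2B_2)-(A_1\circ A_2)(B_1\circ B_2)\right|\le\tfrac14|M_1-m_1|\,|M_2-m_2|\,I_n .$$
   Context: $X\otimes Y$ is the Kronecker (tensor) product and $X\circ Y$ the Hadamard (entrywise) product; $|X|=(X^*X)^{1/2}$. $A$ lies in the ball of diameter $[mI,MI]$ iff $\|A-\frac{M+m}{2}I\|\le\frac{|M-m|}{2}$ (operator norm). *)

theory Defs
  imports "HOL-Analysis.Analysis"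
begin

definition cadj :: "complex^'n^'m \<Rightarrow> complex^'m^'n" where
  "cadj A = (\<chi> i j. cnj (A $ j $ i))"

definition kron :: "complex^'n^'m \<Rightarrow> complex^'q^'p \<Rightarrow> complex^('n \<times> 'q)^('m \<times> 'p)" where
  "kron A B = (\<chi> r c. A $ fst r $ fst c * B $ snd r $ snd c)"

definition hadamard :: "complex^'n^'m \<Rightarrow> complex^'n^'m \<Rightarrow> complex^'n^'m" where
  "hadamard A B = (\<chi> i j. A $ i $ j * B $ i $ j)"

definition opnorm :: "complex^'n^'m \<Rightarrow> real" where
  "opnorm A = onorm (\<lambda>x. A *v x)"

definition in_ball_diam :: "complex^'n^'n \<Rightarrow> complex \<Rightarrow> complex \<Rightarrow> bool" where
  "in_ball_diam A m M \<longleftrightarrow> opnorm (A - mat ((M + m) / 2)) \<le> cmod (M - m) / 2"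

definition psd :: "complex^'n^'n \<Rightarrow> bool" where
  "psd P \<longleftrightarrow> cadj P = P \<and> (\<forall>x. 0 \<le> Re (\<Sum>i\<in>UNIV. cnj (x $ i) * (P *v x) $ i))"

definition loewner_le :: "complex^'n^'n \<Rightarrow> complex^'n^'n \<Rightarrow> bool" where
  "loewner_le X Y \<longleftrightarrow> psd (Y - X)"

definition mat_sqrt :: "complex^'n^'n \<Rightarrow> complex^'n^'n" where
  "mat_sqrt P = (THE S. psd S \<and> S ** S = P)"

definition mat_abs :: "complex^'n^'n \<Rightarrow> complex^'n^'n" where
  "mat_abs X = mat_sqrt (cadj X ** X)"

end

theory Submission
  imports Defs
begin


definition ci :: "complex^'n \<Rightarrow> complex^'n \<Rightarrow> complex" where
  "ci x y = (\<Sum>i\<in>UNIV. cnj (x$i) * y$i)"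

lemma norm_sq_vec: "(norm (x::complex^'n))^2 = (\<Sum>i\<in>UNIV. (cmod (x$i))^2)"
  unfolding norm_vec_def L2_set_def by (simp add: sum_nonneg)

lemma ci_self: "ci x x = of_real ((norm x)^2)"
  unfolding ci_def norm_sq_vec of_real_sum
  by (intro sum.cong refl) (metis complex_norm_square mult.commute of_real_power)

lemma ci_self_re: "Re (ci x x) = (norm x)^2"
  by (simp add: ci_self)

lemma ci_cnj: "cnj (ci x y) = ci y x"
  unfolding ci_def by (simp add: mult.commute)

lemma ci_cs: "cmod (ci x y) \<le> norm x * norm y"
proof -
  have "cmod (ci x y) \<le> (\<Sum>i\<in>UNIV. cmod (x$i) * cmod (y$i))"
    unfolding ci_def by (rule order_trans[OF norm_sum]) (simp add: norm_mult)
  also have "\<dots> \<le> L2_set (\<lambda>i. cmod (x$i)) UNIV * L2_set (\<lambda>i. cmod (y$i)) UNIV"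
    using L2_set_mult_ineq[of "\<lambda>i. cmod (x$i)" "\<lambda>i. cmod (y$i)" UNIV] by simp
  finally show ?thesis by (simp add: norm_vec_def)
qed

lemma ci_adj: "ci x (A *v y) = ci (cadj A *v x) y"
proof -
  have "ci x (A *v y) = (\<Sum>i\<in>UNIV. \<Sum>j\<in>UNIV. cnj (x$i) * A$i$j * y$j)"
    unfolding ci_def matrix_vector_mult_def by (simp add: sum_distrib_left mult.assoc)
  also have "\<dots> = (\<Sum>j\<in>UNIV. \<Sum>i\<in>UNIV. cnj (x$i) * A$i$j * y$j)" by (rule sum.swap)
  also have "\<dots> = ci (cadj A *v x) y"
    unfolding ci_def matrix_vector_mult_def cadj_def by (simp add: sum_distrib_left sum_distrib_right mult_ac)
  finally show ?thesis .
qed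

lemma ci_add_right: "ci x (y + z) = ci x y + ci x z"
  unfolding ci_def by (simp add: distrib_left sum.distrib)
lemma ci_diff_right: "ci x (y - z) = ci x y - ci x z"
  unfolding ci_def by (simp add: right_diff_distrib sum_subtractf)
lemma ci_add_left: "ci (x + y) z = ci x z + ci y z"
  unfolding ci_def by (simp add: distrib_right sum.distrib)
lemma ci_diff_left: "ci (x - y) z = ci x z - ci y z"
  unfolding ci_def by (simp add: left_diff_distrib sum_subtractf)
lemma ci_scale_right: "ci x (c *s y) = c * ci x y"
  unfolding ci_def by (simp add: sum_distrib_left mult_ac)
lemma ci_scale_left: "ci (c *s x) y = cnj c * ci x y"
  unfolding ci_def by (simp add: sum_distrib_left mult_ac)
lemma ci_zero_right[simp]: "ci x 0 = 0" unfolding ci_def by simp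
lemma ci_zero_left[simp]: "ci 0 x = 0" unfolding ci_def by simp
lemma ci_sum_right: "ci x (sum f S) = (\<Sum>s\<in>S. ci x (f s))"
  unfolding ci_def by (simp add: sum_distrib_left sum_component) (rule sum.swap)
lemma ci_sum_left: "ci (sum f S) y = (\<Sum>s\<in>S. ci (f s) y)"
  unfolding ci_def by (simp add: sum_distrib_right sum_component) (rule sum.swap)

lemma cadj_cadj[simp]: "cadj (cadj A) = A"
  unfolding cadj_def by (simp add: vec_eq_iff)

lemma mat_eqI: fixes A B :: "complex^'n^'m" assumes "\<And>x. A *v x = B *v x" shows "A = B"
proof -
  have "A $ i $ j = B $ i $ j" for i j
  proof -
    have "(A *v axis j 1) $ i = (B *v axis j 1) $ i" using assms by simp
    thus ?thesis unfolding matrix_vector_mult_def axis_def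
      by (simp add: if_distrib cong: if_cong)
  qed
  thus ?thesis by (simp add: vec_eq_iff)
qed

lemma mv_scale: "A *v (c *s x) = c *s (A *v (x::complex^'n))"
  by (simp add: vec_eq_iff matrix_vector_mult_def sum_distrib_left mult_ac)
lemma mv_diff: "A *v (x - y) = A *v x - A *v (y::complex^'n)"
  by (simp add: vec_eq_iff matrix_vector_mult_def sum_subtractf right_diff_distrib)
lemma mv_add: "A *v (x + y) = A *v x + A *v (y::complex^'n)"
  by (simp add: vec_eq_iff matrix_vector_mult_def sum.distrib distrib_left)
lemma mv_sum: "A *v (sum f S) = (\<Sum>s\<in>S. A *v (f s::complex^'n))"
  unfolding vec_eq_iff by (auto simp: matrix_vector_mult_def sum_distrib_left sum_component intro!: sum.swap)
lemma mat_mv: "mat c *v x = c *s (x::complex^'n)"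
proof -
  have "\<And>i j. (if i = j then c else 0) * x $ j = (if j = i then c * x $ i else 0)" by auto
  thus ?thesis by (simp add: vec_eq_iff matrix_vector_mult_def mat_def)
qed
lemma diff_mv: "(A - B) *v x = A *v x - B *v (x::complex^'n)"
  by (simp add: vec_eq_iff matrix_vector_mult_def sum_subtractf left_diff_distrib)
lemma zero_mv: "(0::complex^'n^'m) *v x = 0"
  by (simp add: vec_eq_iff matrix_vector_mult_def)
lemma cadj_diff: "cadj (A - B) = cadj A - cadj B"
  by (simp add: vec_eq_iff cadj_def)
lemma cadj_mat: "cadj (mat c :: complex^'n^'n) = mat (cnj c)"
  by (simp add: vec_eq_iff cadj_def mat_def)
lemma cadj_mult: "cadj (A ** B) = cadj B ** (cadj A :: complex^'n^'m)"
  by (simp add: vec_eq_iff cadj_def matrix_matrix_mult_def mult.commute)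

lemma real_quad_lemma:
  fixes a s b :: real
  assumes "\<And>t. 0 \<le> a - 2 * t * s + t^2 * b" "a \<le> 0" "0 \<le> s"
  shows "s = 0"
proof (rule ccontr)
  assume "s \<noteq> 0" hence sp: "s > 0" using assms(3) by simp
  define t where "t = s / (\<bar>b\<bar> + 1)"
  have tp: "t > 0" unfolding t_def using sp by (simp add: add_pos_nonneg)
  have "t^2 * b \<le> t^2 * (\<bar>b\<bar> + 1)" using tp by (intro mult_left_mono) auto
  also have "\<dots> = t * (t * (\<bar>b\<bar> + 1))" by (simp add: power2_eq_square)
  also have "t * (\<bar>b\<bar> + 1) = s" unfolding t_def
    by (metis add_nonneg_pos abs_ge_zero zero_less_one less_irrefl nonzero_eq_divide_eq)
  finally have "a - 2 * t * s + t^2 * b \<le> - (t * s)" using assms(2) by linarith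
  moreover have "t * s > 0" using tp sp by simp
  ultimately show False using assms(1)[of t] by linarith
qed

lemma zero_form:
  assumes herm: "cadj Q = Q"
    and nn: "\<And>t::real. 0 \<le> Re (ci (v - of_real t *s (Q *v v)) (Q *v (v - of_real t *s (Q *v v))))"
    and z: "Re (ci v (Q *v v)) \<le> 0"
  shows "Q *v v = 0"
proof -
  define w where "w = Q *v v"
  have e1: "ci v (Q *v w) = ci w w" using ci_adj[of v Q w] herm w_def by simp
  have "Re (ci (v - of_real t *s w) (Q *v (v - of_real t *s w)))
        = Re (ci v (Q *v v)) - 2 * t * (norm w)^2 + t^2 * Re (ci w (Q *v w))" for t
    unfolding mv_diff mv_scale ci_diff_left ci_diff_right ci_scale_left ci_scale_right e1
    unfolding w_def[symmetric] by (simp add: ci_self power2_eq_square algebra_simps)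
  hence "\<And>t. 0 \<le> Re (ci v (Q *v v)) - 2 * t * (norm w)^2 + t^2 * Re (ci w (Q *v w))"
    using nn unfolding w_def by metis
  from real_quad_lemma[OF this z] have "norm w = 0" by simp
  thus ?thesis unfolding w_def by simp
qed

lemma inner_ci: "inner x y = Re (ci x (y::complex^'n))"
  unfolding inner_vec_def ci_def Re_sum inner_complex_def by simp

definition oe :: "complex^'n^'n \<Rightarrow> (complex^'n) set \<Rightarrow> bool" where
  "oe H B \<longleftrightarrow> finite B \<and> (\<forall>u\<in>B. norm u = 1 \<and> (\<exists>l::real. H *v u = of_real l *s u))
     \<and> (\<forall>u\<in>B. \<forall>v\<in>B. u \<noteq> v \<longrightarrow> ci u v = 0)"

lemma oe_card: fixes B :: "(complex^'n) set" assumes "oe H B" shows "card B < DIM(complex^'n) + 1"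
proof -
  have "pairwise orthogonal B" using assms unfolding oe_def pairwise_def orthogonal_def inner_ci
    by auto
  moreover have "0 \<notin> B" using assms unfolding oe_def by force
  ultimately have "independent B" by (rule pairwise_orthogonal_independent)
  from independent_bound[OF this] show ?thesis by simp
qed

lemma ci_cont: "continuous_on S (\<lambda>x. ci u x)"
  unfolding ci_def by (intro continuous_intros)

lemma quad_cont: "continuous_on S (\<lambda>x. Re (ci x (H *v x)))"
  unfolding ci_def matrix_vector_mult_def by (simp, intro continuous_intros)

lemma ofreal_scale: "of_real r *s x = r *\<^sub>R (x::complex^'n)"
  by (simp add: vec_eq_iff) (simp add: scaleR_conv_of_real)

lemma oe_sum_delta:
  assumes "oe H B" "w \<in> B"
  shows "(\<Sum>u\<in>B. c u * ci w u) = c w"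
proof -
  have fin: "finite B" using assms unfolding oe_def by auto
  have "(\<Sum>u\<in>B. c u * ci w u) = c w * ci w w + (\<Sum>u\<in>B-{w}. c u * ci w u)"
    using sum.remove[OF fin assms(2)] by simp
  also have "(\<Sum>u\<in>B-{w}. c u * ci w u) = 0"
    using assms unfolding oe_def by (intro sum.neutral) auto
  also have "ci w w = 1" using assms unfolding oe_def by (simp add: ci_self)
  finally show ?thesis by simp
qed

lemma spectral_exists:
  fixes H :: "complex^'n^'n" assumes herm: "cadj H = H"
  shows "\<exists>B. oe H B \<and> (\<forall>x. x = (\<Sum>u\<in>B. ci u x *s u))"
proof -
  have "oe H {}" by (simp add: oe_def)
  then obtain B where B: "oe H B" and max: "\<forall>B'. oe H B' \<longrightarrow> card B' \<le> card B"
    using ex_has_greatest_nat[of "oe H" "{}" card "DIM(complex^'n) + 1"] oe_card by blast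
  have finB: "finite B" using B unfolding oe_def by auto
  define W where "W = {x. \<forall>u\<in>B. ci u x = 0}"
  have Wscale: "c *s x \<in> W" if "x \<in> W" for c x using that by (simp add: W_def ci_scale_right)
  have Wdiff: "x - y \<in> W" if "x\<in>W" "y\<in>W" for x y using that by (simp add: W_def ci_diff_right)
  have W0: "W \<subseteq> {0}"
  proof (rule ccontr)
    assume "\<not> W \<subseteq> {0}" then obtain x0 where x0: "x0 \<in> W" "x0 \<noteq> 0" by auto
    have Winv: "H *v x \<in> W" if "x \<in> W" for x
    proof -
      { fix u assume u: "u \<in> B"
        then obtain l::real where l: "H *v u = of_real l *s u" using B unfolding oe_def by blast
        have "ci u (H *v x) = ci (H *v u) x" using ci_adj[of u H x] herm by simp
        also have "\<dots> = 0" using l u that by (simp add: ci_scale_left W_def)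
        finally have "ci u (H *v x) = 0" . }
      thus ?thesis by (simp add: W_def)
    qed
    define K where "K = W \<inter> sphere 0 1"
    have "W = (\<Inter>u\<in>B. {x. ci u x = 0})" unfolding W_def by auto
    hence "closed W" by (auto intro!: closed_INT closed_Collect_eq ci_cont continuous_on_const)
    hence cK: "compact K" unfolding K_def by (intro closed_Int_compact compact_sphere)
    define y0 where "y0 = of_real (1 / norm x0) *s x0"
    have "y0 \<in> W" using Wscale x0 unfolding y0_def by blast
    moreover have "norm y0 = 1" unfolding y0_def ofreal_scale using x0 by simp
    ultimately have "y0 \<in> K" unfolding K_def by simp
    hence "K \<noteq> {}" by auto
    then obtain v where vK: "v \<in> K" and vmax: "\<forall>x\<in>K. Re (ci x (H *v x)) \<le> Re (ci v (H *v v))"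
      using continuous_attains_sup[OF cK _ quad_cont] by blast
    define l where "l = Re (ci v (H *v v))"
    define Q where "Q = mat (of_real l) - H"
    have hQ: "cadj Q = Q" unfolding Q_def cadj_diff cadj_mat herm by simp
    have Qx: "Q *v x = of_real l *s x - H *v x" for x unfolding Q_def diff_mv mat_mv ..
    have QW: "0 \<le> Re (ci x (Q *v x))" if xW: "x \<in> W" for x
    proof (cases "x = 0")
      case True thus ?thesis by simp
    next
      case False
      define c where "c = 1 / norm x"
      have "of_real c *s x \<in> W" using xW Wscale by blast
      moreover have "norm (of_real c *s x) = 1" unfolding c_def ofreal_scale using False by simp
      ultimately have "of_real c *s x \<in> K" unfolding K_def by simp
      hence "Re (ci (of_real c *s x) (H *v (of_real c *s x))) \<le> l" using vmax l_def by auto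
      hence "c^2 * Re (ci x (H *v x)) \<le> l"
        by (simp add: mv_scale ci_scale_left ci_scale_right power2_eq_square mult.assoc)
      hence "(norm x)^2 * (c^2 * Re (ci x (H *v x))) \<le> (norm x)^2 * l"
        by (intro mult_left_mono) auto
      hence "Re (ci x (H *v x)) \<le> (norm x)^2 * l" using False unfolding c_def
        by (simp add: power2_eq_square field_simps)
      thus ?thesis unfolding Qx ci_diff_right ci_scale_right by (simp add: ci_self mult.commute)
    qed
    have vn: "norm v = 1" "v \<in> W" using vK unfolding K_def by auto
    have "Re (ci v (Q *v v)) \<le> 0" unfolding Qx ci_diff_right ci_scale_right l_def
      by (simp add: ci_self vn)
    moreover have "Q *v v \<in> W" unfolding Qx using vn Wscale Winv Wdiff by auto
    ultimately have "Q *v v = 0" using hQ vn by (intro zero_form QW Wdiff Wscale) auto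
    hence ev: "H *v v = of_real l *s v" unfolding Qx by simp
    have vnotB: "v \<notin> B"
    proof
      assume "v \<in> B" hence "ci v v = 0" using vn unfolding W_def by auto
      thus False using vn by (simp add: ci_self)
    qed
    have "oe H (insert v B)"
      using B ev vn unfolding oe_def W_def
      by (auto, metis ci_cnj complex_cnj_zero)
    hence "card (insert v B) \<le> card B" using max by blast
    thus False using vnotB finB by simp
  qed
  have "\<forall>x. x = (\<Sum>u\<in>B. ci u x *s u)"
  proof
    fix x
    define y where "y = x - (\<Sum>u\<in>B. ci u x *s u)"
    have "y \<in> W" unfolding W_def y_def
      by (auto simp: ci_diff_right ci_sum_right ci_scale_right oe_sum_delta[OF B])
    hence "y = 0" using W0 by auto
    thus "x = (\<Sum>u\<in>B. ci u x *s u)" unfolding y_def by simp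
  qed
  thus ?thesis using B by blast
qed



lemma psd_ci: "psd P \<longleftrightarrow> cadj P = P \<and> (\<forall>x. 0 \<le> Re (ci x (P *v x)))"
  unfolding psd_def ci_def ..

definition Mg :: "(complex^'n) set \<Rightarrow> (complex^'n \<Rightarrow> real) \<Rightarrow> complex^'n^'n" where
  "Mg B g = (\<chi> i j. \<Sum>u\<in>B. of_real (g u) * u$i * cnj (u$j))"

lemma Mg_mv: "Mg B g *v x = (\<Sum>u\<in>B. (of_real (g u) * ci u x) *s u)"
proof -
  have "(Mg B g *v x) $ i = (\<Sum>u\<in>B. (of_real (g u) * ci u x) * u $ i)" for i
  proof -
    have "(Mg B g *v x) $ i = (\<Sum>j\<in>UNIV. \<Sum>u\<in>B. of_real (g u) * u$i * cnj (u$j) * x$j)"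
      unfolding Mg_def matrix_vector_mult_def by (simp add: sum_distrib_right)
    also have "\<dots> = (\<Sum>u\<in>B. \<Sum>j\<in>UNIV. of_real (g u) * u$i * cnj (u$j) * x$j)" by (rule sum.swap)
    also have "\<dots> = (\<Sum>u\<in>B. (of_real (g u) * ci u x) * u $ i)"
      unfolding ci_def by (simp add: sum_distrib_left sum_distrib_right mult_ac)
    finally show ?thesis .
  qed
  thus ?thesis by (simp add: vec_eq_iff sum_component)
qed

lemma Mg_herm: "cadj (Mg B g) = Mg B g"
  unfolding Mg_def cadj_def by (simp add: vec_eq_iff mult_ac)

lemma Mg_quad: "Re (ci x (Mg B g *v x)) = (\<Sum>u\<in>B. g u * (cmod (ci u x))^2)"
proof -
  have "ci x (Mg B g *v x) = (\<Sum>u\<in>B. of_real (g u * (cmod (ci u x))^2))"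
    unfolding Mg_mv ci_sum_right ci_scale_right
  proof (rule sum.cong[OF refl])
    fix u
    have e: "ci x u = cnj (ci u x)" by (simp add: ci_cnj)
    have "of_real (g u) * ci u x * ci x u = of_real (g u) * (ci u x * cnj (ci u x))"
      unfolding e by (simp add: mult.assoc)
    also have "\<dots> = of_real (g u) * of_real ((cmod (ci u x))^2)" by (simp only: complex_norm_square)
    also have "\<dots> = of_real (g u * (cmod (ci u x))^2)" by (simp only: of_real_mult)
    finally show "of_real (g u) * ci u x * ci x u = of_real (g u * (cmod (ci u x))^2)" .
  qed
  thus ?thesis by (simp only: Re_sum Re_complex_of_real)
qed
lemma Mg_psd: assumes "\<And>u. u \<in> B \<Longrightarrow> 0 \<le> g u" shows "psd (Mg B g)"
  unfolding psd_ci Mg_quad using assms by (auto simp: Mg_herm intro!: sum_nonneg)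

lemma Mg_cong: assumes "\<And>u. u \<in> B \<Longrightarrow> g u = h u" shows "Mg B g = Mg B h"
  unfolding Mg_def using assms by (simp add: vec_eq_iff)

lemma Mg_mult: assumes "oe H B" shows "Mg B g ** Mg B h = Mg B (\<lambda>u. g u * h u)"
proof (rule mat_eqI)
  fix x
  have "Mg B g ** Mg B h *v x = Mg B g *v (Mg B h *v x)" by (simp add: matrix_vector_mul_assoc)
  also have "\<dots> = Mg B (\<lambda>u. g u * h u) *v x"
    unfolding Mg_mv ci_sum_right ci_scale_right
  proof (intro sum.cong refl)
    fix u assume u: "u \<in> B"
    have "(\<Sum>s\<in>B. (of_real (h s) * ci s x) * ci u s) = of_real (h u) * ci u x"
      by (rule oe_sum_delta[OF assms u])
    thus "(of_real (g u) * (\<Sum>s\<in>B. of_real (h s) * ci s x * ci u s)) *s u =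
          (of_real (g u * h u) * ci u x) *s u" by (simp add: mult_ac)
  qed
  finally show "Mg B g ** Mg B h *v x = Mg B (\<lambda>u. g u * h u) *v x" .
qed

lemma Mg_id: assumes "\<forall>x. x = (\<Sum>u\<in>B. ci u x *s u)"
  shows "mat (of_real r) - Mg B g = Mg B (\<lambda>u. r - g u)"
proof (rule mat_eqI)
  fix x
  have "mat (of_real r) *v x = of_real r *s (\<Sum>u\<in>B. ci u x *s u)"
    unfolding mat_mv using assms[rule_format, of x] by simp
  also have "\<dots> = (\<Sum>u\<in>B. (of_real r * ci u x) *s u)"
    by (simp add: vec_eq_iff sum_distrib_left sum_component mult_ac)
  finally have e: "mat (of_real r) *v x = (\<Sum>u\<in>B. (of_real r * ci u x) *s u)" .
  show "(mat (of_real r) - Mg B g) *v x = Mg B (\<lambda>u. r - g u) *v x"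
    unfolding diff_mv Mg_mv e
    by (simp add: vec_eq_iff sum_component sum_subtractf[symmetric] algebra_simps)
qed


lemma spectral:
  fixes H :: "complex^'n^'n" assumes herm: "cadj H = H"
  obtains B where "oe H B" "\<forall>x. x = (\<Sum>u\<in>B. ci u x *s u)"
    "\<And>u. u \<in> B \<Longrightarrow> H *v u = of_real (Re (ci u (H *v u))) *s u"
    "H = Mg B (\<lambda>u. Re (ci u (H *v u)))"
proof -
  obtain B where B: "oe H B" and C: "\<forall>x. x = (\<Sum>u\<in>B. ci u x *s u)"
    using spectral_exists[OF herm] by blast
  define ev where "ev u = Re (ci u (H *v u))" for u
  have E: "H *v u = of_real (ev u) *s u" if u: "u \<in> B" for u
  proof -
    obtain l :: real where l: "H *v u = of_real l *s u" and n: "norm u = 1"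
      using B u unfolding oe_def by blast
    have "ci u (H *v u) = of_real l" unfolding l ci_scale_right by (simp add: ci_self n)
    hence "ev u = l" unfolding ev_def by simp
    thus ?thesis using l by simp
  qed
  have M: "H = Mg B ev"
  proof (rule mat_eqI)
    fix x
    from arg_cong[OF C[rule_format, of x], of "\<lambda>y. H *v y"]
    have "H *v x = H *v (\<Sum>u\<in>B. ci u x *s u)" .
    also have "\<dots> = (\<Sum>u\<in>B. ci u x *s (H *v u))" by (simp add: mv_sum mv_scale)
    also have "\<dots> = Mg B ev *v x" unfolding Mg_mv
      by (intro sum.cong refl) (simp add: E vector_smult_assoc mult.commute)
    finally show "H *v x = Mg B ev *v x" .
  qed
  show ?thesis by (rule that[OF B C E[unfolded ev_def] M[unfolded ev_def]])
qed

lemma psd_sqrt_unique: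
  fixes S T :: "complex^'n^'n"
  assumes S: "psd S" and T: "psd T" and eq: "S ** S = T ** T"
  shows "S = T"
proof -
  define X where "X = S - T"
  have hS: "cadj S = S" and nS: "\<And>x. 0 \<le> Re (ci x (S *v x))" using S unfolding psd_ci by auto
  have hT: "cadj T = T" and nT: "\<And>x. 0 \<le> Re (ci x (T *v x))" using T unfolding psd_ci by auto
  have hX: "cadj X = X" unfolding X_def cadj_diff hS hT ..
  obtain B where B: "oe X B" and C: "\<forall>x. x = (\<Sum>u\<in>B. ci u x *s u)"
    and E: "\<And>u. u \<in> B \<Longrightarrow> X *v u = of_real (Re (ci u (X *v u))) *s u"
    and R: "X = Mg B (\<lambda>u. Re (ci u (X *v u)))"
    using spectral[OF hX] by blast
  show ?thesis
  proof (cases "\<forall>u\<in>B. Re (ci u (X *v u)) = 0")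
    case True
    have "X = 0"
    proof (rule mat_eqI)
      fix x
      from arg_cong[OF R, of "\<lambda>M. M *v x"]
      have "X *v x = Mg B (\<lambda>u. Re (ci u (X *v u))) *v x" .
      also have "\<dots> = 0" unfolding Mg_mv using True by (simp add: sum.neutral)
      finally show "X *v x = 0 *v x" by (simp add: zero_mv)
    qed
    thus ?thesis unfolding X_def by simp
  next
    case False
    then obtain v where v: "v \<in> B" and l0: "Re (ci v (X *v v)) \<noteq> 0" by auto
    define l where "l = Re (ci v (X *v v))"
    have Xv: "X *v v = of_real l *s v" using E[OF v] unfolding l_def .
    have nv: "norm v = 1" using B v unfolding oe_def by auto
    have Xy: "X *v y = S *v y - T *v y" for y unfolding X_def diff_mv ..
    have "S *v (X *v v) + X *v (T *v v) = (S ** S) *v v - (T ** T) *v v"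
      unfolding Xy mv_diff by (simp add: matrix_vector_mul_assoc)
    hence z: "S *v (X *v v) + X *v (T *v v) = 0" using eq by simp
    have "ci v (S *v (X *v v)) = of_real l * ci v (S *v v)"
      unfolding Xv mv_scale ci_scale_right ..
    moreover have "ci v (X *v (T *v v)) = of_real l * ci v (T *v v)"
      unfolding ci_adj[of v X] hX Xv ci_scale_left by simp
    moreover have "ci v (S *v (X *v v)) + ci v (X *v (T *v v)) = 0"
      using arg_cong[OF z, of "ci v"] by (simp add: ci_add_right)
    ultimately have "of_real l * (ci v (S *v v) + ci v (T *v v)) = 0" by (simp add: algebra_simps)
    hence "ci v (S *v v) + ci v (T *v v) = 0" using l0 unfolding l_def by simp
    hence "Re (ci v (S *v v)) + Re (ci v (T *v v)) = 0" by (metis plus_complex.sel(1) zero_complex.sel(1))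
    hence r1: "Re (ci v (S *v v)) \<le> 0" and r2: "Re (ci v (T *v v)) \<le> 0" using nS[of v] nT[of v] by linarith+
    have "S *v v = 0" by (rule zero_form[OF hS nS r1])
    moreover have "T *v v = 0" by (rule zero_form[OF hT nT r2])
    ultimately have "X *v v = 0" unfolding Xy by simp
    hence "of_real l *s v = 0" using Xv by simp
    hence "v = 0" using l0 unfolding l_def by (simp add: vec_eq_iff)
    thus ?thesis using nv by simp
  qed
qed

lemma abs_bound:
  fixes D :: "complex^'n^'n"
  assumes bnd: "\<And>x. norm (D *v x) \<le> r * norm x" and r0: "0 \<le> r"
  shows "loewner_le (mat_abs D) (mat (of_real r))"
proof -
  define Q where "Q = cadj D ** D"
  have hQ: "cadj Q = Q" unfolding Q_def cadj_mult by simp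
  obtain B where B: "oe Q B" and C: "\<forall>x. x = (\<Sum>u\<in>B. ci u x *s u)"
    and "\<And>u. u \<in> B \<Longrightarrow> Q *v u = of_real (Re (ci u (Q *v u))) *s u"
    and R: "Q = Mg B (\<lambda>u. Re (ci u (Q *v u)))"
    using spectral[OF hQ] by blast
  define ev where "ev = (\<lambda>u. Re (ci u (Q *v u)))"
  have evn: "ev u = (norm (D *v u))^2" for u
  proof -
    have "ci u (Q *v u) = ci (D *v u) (D *v u)"
      unfolding Q_def matrix_vector_mul_assoc[symmetric] ci_adj[of u "cadj D"] by simp
    thus ?thesis unfolding ev_def by (simp add: ci_self_re)
  qed
  have ev0: "0 \<le> ev u" for u unfolding evn by simp
  have evr: "sqrt (ev u) \<le> r" if "u \<in> B" for u
  proof -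
    have "norm u = 1" using B that unfolding oe_def by auto
    hence "norm (D *v u) \<le> r" using bnd[of u] by simp
    thus ?thesis unfolding evn by simp
  qed
  define S where "S = Mg B (\<lambda>u. sqrt (ev u))"
  have pS: "psd S" unfolding S_def by (rule Mg_psd) (simp add: ev0)
  have R': "Mg B ev = Q" unfolding ev_def using R by (rule sym)
  have "S ** S = Mg B (\<lambda>u. sqrt (ev u) * sqrt (ev u))" unfolding S_def Mg_mult[OF B] ..
  also have "\<dots> = Mg B ev" by (rule Mg_cong) (simp add: ev0)
  finally have SS: "S ** S = Q" unfolding R' .
  have "mat_sqrt Q = S" unfolding mat_sqrt_def
  proof (rule the_equality)
    show "psd S \<and> S ** S = Q" using pS SS by simp
    fix T assume "psd T \<and> T ** T = Q"
    thus "T = S" using psd_sqrt_unique[of T S] pS SS by simp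
  qed
  hence "mat_abs D = S" unfolding mat_abs_def Q_def .
  moreover have "psd (mat (of_real r) - S)" unfolding S_def Mg_id[OF C]
    by (rule Mg_psd) (simp add: evr)
  ultimately show ?thesis unfolding loewner_le_def by simp
qed


lemma sum_pair: "(\<Sum>p\<in>(UNIV::('a::finite\<times>'b::finite) set). f p) = (\<Sum>k\<in>UNIV. \<Sum>l\<in>UNIV. f (k,l))"
  unfolding sum.cartesian_product UNIV_Times_UNIV by simp

lemma offdiag_sum: "(\<Sum>l\<in>(UNIV::'a::finite set). if k = l then 0 else f l) = (\<Sum>l\<in>UNIV. f l) - (f k :: complex)"
proof -
  have "(\<Sum>l\<in>(UNIV::'a set). f l) = (\<Sum>l\<in>UNIV. (if k = l then f l else 0) + (if k = l then 0 else f l))"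
    by (intro sum.cong) auto
  also have "\<dots> = f k + (\<Sum>l\<in>UNIV. if k = l then 0 else f l)" by (simp add: sum.distrib)
  finally show ?thesis by simp
qed

definition Jv :: "complex^('n::finite) \<Rightarrow> complex^('n\<times>'n)" where
  "Jv x = (\<chi> p. if fst p = snd p then x $ fst p else 0)"
definition Pv :: "complex^('n::finite\<times>'n) \<Rightarrow> complex^('n\<times>'n)" where
  "Pv z = (\<chi> p. if fst p = snd p then 0 else z $ p)"
definition Jt :: "complex^('n::finite\<times>'n) \<Rightarrow> complex^'n" where
  "Jt w = (\<chi> i. w $ (i,i))"

lemma norm_Jv: "norm (Jv x) = norm x"
proof -
  have i: "(\<Sum>l\<in>UNIV. (cmod ((Jv x) $ (k,l)))^2) = (cmod (x$k))^2" for k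
  proof -
    have "(\<Sum>l\<in>UNIV. (cmod ((Jv x) $ (k,l)))^2) = (\<Sum>l\<in>UNIV. if k = l then (cmod (x$k))^2 else 0)"
      unfolding Jv_def by (intro sum.cong) auto
    thus ?thesis by simp
  qed
  have "(norm (Jv x))^2 = (norm x)^2"
    unfolding norm_sq_vec sum_pair i ..
  thus ?thesis by (rule power2_eq_imp_eq) auto
qed

lemma norm_Pv: "norm (Pv z) \<le> norm z"
proof -
  have "(norm (Pv z))^2 \<le> (norm z)^2"
    unfolding norm_sq_vec Pv_def by (intro sum_mono) auto
  thus ?thesis by (rule power2_le_imp_le) auto
qed

lemma norm_Jt: "norm (Jt w) \<le> norm w"
proof -
  have "(norm (Jt w))^2 = (\<Sum>k\<in>UNIV. \<Sum>l\<in>UNIV. if k = l then (cmod (w $ (k,l)))^2 else 0)"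
    unfolding norm_sq_vec Jt_def by simp
  also have "\<dots> \<le> (\<Sum>k\<in>UNIV. \<Sum>l\<in>UNIV. (cmod (w $ (k,l)))^2)"
    by (intro sum_mono) auto
  also have "\<dots> = (norm w)^2" unfolding norm_sq_vec sum_pair ..
  finally show ?thesis by (rule power2_le_imp_le) auto
qed

lemma D_entry:
  fixes A1 A2 B1 B2 :: "complex^'n^'n"
  shows "(hadamard (A1 ** B1) (A2 ** B2) - hadamard A1 A2 ** hadamard B1 B2) $ i $ j
    = (\<Sum>k\<in>UNIV. \<Sum>l\<in>UNIV. if k = l then 0 else A1$i$k * A2$i$l * B1$k$j * B2$l$j)"
proof -
  have "(\<Sum>k\<in>UNIV. \<Sum>l\<in>UNIV. if k = l then 0 else A1$i$k * A2$i$l * B1$k$j * B2$l$j)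
     = (\<Sum>k\<in>UNIV. (\<Sum>l\<in>UNIV. A1$i$k * A2$i$l * B1$k$j * B2$l$j) - A1$i$k * A2$i$k * B1$k$j * B2$k$j)"
    by (intro sum.cong refl offdiag_sum)
  also have "\<dots> = (\<Sum>k\<in>UNIV. \<Sum>l\<in>UNIV. A1$i$k * A2$i$l * B1$k$j * B2$l$j)
      - (\<Sum>k\<in>UNIV. A1$i$k * A2$i$k * B1$k$j * B2$k$j)" by (simp add: sum_subtractf)
  also have "\<dots> = (hadamard (A1 ** B1) (A2 ** B2) - hadamard A1 A2 ** hadamard B1 B2) $ i $ j"
    unfolding hadamard_def matrix_matrix_mult_def
    by (simp add: sum_product mult_ac)
  finally show ?thesis by simp
qed

lemma sum_delta_mult: "(\<Sum>j'\<in>(UNIV::'a::finite set). f j' * (if j = j' then y else 0)) = f j * (y::complex)"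
proof -
  have "(\<Sum>j'\<in>(UNIV::'a set). f j' * (if j = j' then y else 0)) = (\<Sum>j'\<in>UNIV. if j = j' then f j' * y else 0)"
    by (intro sum.cong) auto
  thus ?thesis by simp
qed

lemma D_ident:
  fixes A1 A2 B1 B2 :: "complex^'n^'n"
  shows "(hadamard (A1 ** B1) (A2 ** B2) - hadamard A1 A2 ** hadamard B1 B2) *v x
    = Jt ((kron A1 A2 - mat c1) *v Pv ((kron B1 B2 - mat c2) *v Jv x))"
proof -
  have e1: "((kron B1 B2 - mat c2) *v Jv x) $ (k,l) = (\<Sum>j\<in>UNIV. B1$k$j * B2$l$j * x$j)"
    if kl: "k \<noteq> l" for k l
  proof -
    have "((kron B1 B2 - mat c2) *v Jv x) $ (k,l)
      = (\<Sum>j\<in>UNIV. \<Sum>j'\<in>UNIV. (B1$k$j * B2$l$j' - (if (k,l) = (j,j') then c2 else 0)) *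
           (if j = j' then x $ j else 0))"
      unfolding matrix_vector_mult_def sum_pair kron_def mat_def Jv_def by (simp cong: if_cong)
    also have "\<dots> = (\<Sum>j\<in>UNIV. (B1$k$j * B2$l$j - (if (k,l) = (j,j) then c2 else 0)) * x$j)"
      by (intro sum.cong refl sum_delta_mult)
    also have "\<dots> = (\<Sum>j\<in>UNIV. B1$k$j * B2$l$j * x$j)"
      using kl by (intro sum.cong refl) auto
    finally show ?thesis .
  qed
  define w where "w = (kron B1 B2 - mat c2) *v Jv x"
  have "(Jt ((kron A1 A2 - mat c1) *v Pv w)) $ i
     = (\<Sum>k\<in>UNIV. \<Sum>l\<in>UNIV. if k = l then 0 else A1$i$k * A2$i$l * (\<Sum>j\<in>UNIV. B1$k$j * B2$l$j * x$j))"
    for i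
  proof -
    have "(Jt ((kron A1 A2 - mat c1) *v Pv w)) $ i
      = (\<Sum>k\<in>UNIV. \<Sum>l\<in>UNIV. (A1$i$k * A2$i$l - (if (i,i) = (k,l) then c1 else 0)) *
          (if k = l then 0 else w $ (k,l)))"
      unfolding Jt_def matrix_vector_mult_def sum_pair kron_def mat_def Pv_def by (simp cong: if_cong)
    also have "\<dots> = (\<Sum>k\<in>UNIV. \<Sum>l\<in>UNIV. if k = l then 0 else A1$i$k * A2$i$l * (\<Sum>j\<in>UNIV. B1$k$j * B2$l$j * x$j))"
      unfolding w_def by (intro sum.cong refl) (auto simp: e1)
    finally show ?thesis .
  qed
  moreover have "((hadamard (A1 ** B1) (A2 ** B2) - hadamard A1 A2 ** hadamard B1 B2) *v x) $ i
     = (\<Sum>k\<in>UNIV. \<Sum>l\<in>UNIV. if k = l then 0 else A1$i$k * A2$i$l * (\<Sum>j\<in>UNIV. B1$k$j * B2$l$j * x$j))"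
    for i
  proof -
    have "((hadamard (A1 ** B1) (A2 ** B2) - hadamard A1 A2 ** hadamard B1 B2) *v x) $ i
      = (\<Sum>j\<in>UNIV. \<Sum>k\<in>UNIV. \<Sum>l\<in>UNIV. if k = l then 0 else A1$i$k * A2$i$l * B1$k$j * B2$l$j * x$j)"
      unfolding matrix_vector_mult_def[of "_ - _"] D_entry
      by (simp add: sum_distrib_right if_distrib[of "\<lambda>a. a * _"] cong: if_cong)
    also have "\<dots> = (\<Sum>k\<in>UNIV. \<Sum>j\<in>UNIV. \<Sum>l\<in>UNIV. if k = l then 0 else A1$i$k * A2$i$l * B1$k$j * B2$l$j * x$j)"
      by (rule sum.swap)
    also have "\<dots> = (\<Sum>k\<in>UNIV. \<Sum>l\<in>UNIV. \<Sum>j\<in>UNIV. if k = l then 0 else A1$i$k * A2$i$l * B1$k$j * B2$l$j * x$j)"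
      by (intro sum.cong refl sum.swap)
    also have "\<dots> = (\<Sum>k\<in>UNIV. \<Sum>l\<in>UNIV. if k = l then 0 else A1$i$k * A2$i$l * (\<Sum>j\<in>UNIV. B1$k$j * B2$l$j * x$j))"
      by (intro sum.cong refl) (simp add: sum_distrib_left mult_ac)
    finally show ?thesis .
  qed
  ultimately show ?thesis unfolding w_def by (simp add: vec_eq_iff)
qed


theorem mainTheorem12:
  fixes A1 A2 B1 B2 :: "complex^'n^'n" and m1 M1 m2 M2 :: complex
  assumes "in_ball_diam (kron A1 A2) m1 M1"
    and "in_ball_diam (kron B1 B2) m2 M2"
  shows "loewner_le
           (mat_abs (hadamard (A1 ** B1) (A2 ** B2) - hadamard A1 A2 ** hadamard B1 B2))
           (mat (complex_of_real (cmod (M1 - m1) * cmod (M2 - m2) / 4)))"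
proof -
  define c1 where "c1 = (M1 + m1) / 2"
  define c2 where "c2 = (M2 + m2) / 2"
  define r1 where "r1 = cmod (M1 - m1) / 2"
  define r2 where "r2 = cmod (M2 - m2) / 2"
  define A' where "A' = kron A1 A2 - mat c1"
  define B' where "B' = kron B1 B2 - mat c2"
  have a: "onorm ((*v) A') \<le> r1" using assms(1) unfolding in_ball_diam_def opnorm_def A'_def c1_def r1_def
    by simp
  have b: "onorm ((*v) B') \<le> r2" using assms(2) unfolding in_ball_diam_def opnorm_def B'_def c2_def r2_def
    by simp
  have na: "norm (A' *v z) \<le> r1 * norm z" for z
    using onorm[OF matrix_vector_mul_bounded_linear, of A' z] mult_right_mono[OF a norm_ge_zero, of z]
    by linarith
  have nb: "norm (B' *v z) \<le> r2 * norm z" for z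
    using onorm[OF matrix_vector_mul_bounded_linear, of B' z] mult_right_mono[OF b norm_ge_zero, of z]
    by linarith
  have r1p: "0 \<le> r1" unfolding r1_def by simp
  have r2p: "0 \<le> r2" unfolding r2_def by simp
  define D where "D = hadamard (A1 ** B1) (A2 ** B2) - hadamard A1 A2 ** hadamard B1 B2"
  have "norm (D *v x) \<le> (r1 * r2) * norm x" for x
  proof -
    have "norm (D *v x) = norm (Jt (A' *v Pv (B' *v Jv x)))"
      unfolding D_def A'_def B'_def using D_ident[of A1 B1 A2 B2 x c1 c2] by simp
    also have "\<dots> \<le> norm (A' *v Pv (B' *v Jv x))" by (rule norm_Jt)
    also have "\<dots> \<le> r1 * norm (Pv (B' *v Jv x))" by (rule na)
    also have "\<dots> \<le> r1 * norm (B' *v Jv x)" by (intro mult_left_mono norm_Pv r1p)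
    also have "\<dots> \<le> r1 * (r2 * norm (Jv x))" by (intro mult_left_mono nb r1p)
    also have "\<dots> = (r1 * r2) * norm x" by (simp add: norm_Jv)
    finally show ?thesis .
  qed
  hence "loewner_le (mat_abs D) (mat (of_real (r1 * r2)))"
    by (rule abs_bound) (simp add: r1p r2p)
  moreover have "r1 * r2 = cmod (M1 - m1) * cmod (M2 - m2) / 4" unfolding r1_def r2_def by simp
  ultimately show ?thesis unfolding D_def by simp
qed

end
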